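(* We have $\mathsf{E}^{-1}=\mathsf{E}$, $\mathsf{E}\mathsf{A}\mathsf{E}=\mathsf{B}$, $\mathsf{E}\mathsf{B}\mathsf{E}=\mathsf{A}$, $\mathsf{E}\mathsf{C}\mathsf{E}=\mathsf{C}$. For every $d\in\mathbb{N}$ and $m_1,\dots,m_{2d}\in\mathbb{Z}$, with $t=\operatorname{tr}(W)$, $s=\operatorname{tr}^*(W)$, $W=W_1(m_1,\dots,m_{2d})$, the characteristic polynomial of $\mathsf{C}\mathsf{W}(m_1,\dots,m_{2d})\mathsf{E}$ is $$\det(xI_5-\mathsf{C}\mathsf{W}\mathsf{E})=(x-1)\big(1-4sx-(s^2+4ts+2)x^2-4sx^3+x^4\big),$$ and hence its eigenvalues are $1$ and $$s+\tfrac12\sqrt{5s^2+4ts+4}\pm\tfrac12\sqrt{9s^2+4ts+4s\sqrt{5s^2+4ts+4}},\qquad s-\tfrac12\sqrt{5s^2+4ts+4}\pm\tfrac12\sqrt{9s^2+4ts-4s\sqrt{5s^2+4ts+4}}.$$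
   Context: $A_1=\begin{pmatrix}1&1\\0&1\end{pmatrix}$, $B_1=\begin{pmatrix}1&0\\1&1\end{pmatrix}$, $W_1(m_1,\dots,m_{2d})=\prod_{i=1}^dA_1^{m_{2i-1}}B_1^{m_{2i}}$. Let $\mathsf{A}=\begin{pmatrix}1&1&0&0&2\\0&1&0&0&0\\0&0&1&1&0\\0&0&0&1&0\\0&0&0&0&1\end{pmatrix}$, $\mathsf{B}=\begin{pmatrix}1&0&0&0&0\\1&1&0&0&0\\0&0&1&0&0\\0&0&1&1&2\\0&0&0&0&1\end{pmatrix}$, $\mathsf{C}=\begin{pmatrix}1&0&0&0&0\\0&1&0&0&0\\0&0&1&0&0\\0&0&0&1&0\\2&0&0&2&1\end{pmatrix}$, $\mathsf{E}=\begin{pmatrix}0&0&0&1&0\\0&0&1&0&0\\0&1&0&0&0\\1&0&0&0&0\\0&0&0&0&1\end{pmatrix}$, and $\mathsf{W}(m_1,\dots,m_{2d})=\prod_{i=1}^d\mathsf{A}^{m_{2i-1}}\mathsf{B}^{m_{2i}}$. $\operatorname{tr}^*(M)=M_{1,2}+M_{2,1}$ is the anti-trace of a $2\times2$ matrix. *)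

theory Defs
  imports "Jordan_Normal_Form.Char_Poly" "HOL-Complex_Analysis.Complex_Analysis"
begin

definition mat_inv :: "'a :: comm_ring_1 mat \<Rightarrow> 'a mat" where
  "mat_inv X = (SOME Y. Y \<in> carrier_mat (dim_row X) (dim_row X) \<and> inverts_mat X Y \<and> inverts_mat Y X)"

definition zpow_mat :: "'a :: comm_ring_1 mat \<Rightarrow> int \<Rightarrow> 'a mat" where
  "zpow_mat X k = (if 0 \<le> k then X ^\<^sub>m nat k else (mat_inv X) ^\<^sub>m nat (- k))"

text \<open>The word  prod_{i=1}^d X^(m_(2i-1)) Y^(m_(2i))  in n x n matrices (ordered left to right).\<close>
fun word_mat :: "nat \<Rightarrow> 'a :: comm_ring_1 mat \<Rightarrow> 'a mat \<Rightarrow> (nat \<Rightarrow> int) \<Rightarrow> nat \<Rightarrow> 'a mat" where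
  "word_mat n X Y m 0 = 1\<^sub>m n"
| "word_mat n X Y m (Suc d) =
     word_mat n X Y m d * (zpow_mat X (m (2 * d + 1)) * zpow_mat Y (m (2 * d + 2)))"

definition A1 :: "int mat" where "A1 = mat_of_rows_list 2 [[1,1],[0,1]]"
definition B1 :: "int mat" where "B1 = mat_of_rows_list 2 [[1,0],[1,1]]"

definition W1 :: "(nat \<Rightarrow> int) \<Rightarrow> nat \<Rightarrow> int mat" where
  "W1 m d = word_mat 2 A1 B1 m d"

definition sA :: "int mat" where "sA = mat_of_rows_list 5
  [[1,1,0,0,2],[0,1,0,0,0],[0,0,1,1,0],[0,0,0,1,0],[0,0,0,0,1]]"
definition sB :: "int mat" where "sB = mat_of_rows_list 5
  [[1,0,0,0,0],[1,1,0,0,0],[0,0,1,0,0],[0,0,1,1,2],[0,0,0,0,1]]"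
definition sC :: "int mat" where "sC = mat_of_rows_list 5
  [[1,0,0,0,0],[0,1,0,0,0],[0,0,1,0,0],[0,0,0,1,0],[2,0,0,2,1]]"
definition sE :: "int mat" where "sE = mat_of_rows_list 5
  [[0,0,0,1,0],[0,0,1,0,0],[0,1,0,0,0],[1,0,0,0,0],[0,0,0,0,1]]"

definition sW :: "(nat \<Rightarrow> int) \<Rightarrow> nat \<Rightarrow> int mat" where
  "sW m d = word_mat 5 sA sB m d"

definition tr2 :: "'a :: comm_ring_1 mat \<Rightarrow> 'a" where
  "tr2 M = M $$ (0,0) + M $$ (1,1)"

definition antitr2 :: "'a :: comm_ring_1 mat \<Rightarrow> 'a" where
  "antitr2 M = M $$ (0,1) + M $$ (1,0)"

end

theory Submission imports Defs begin

lemma mat_mult_mat: "Matrix.mat n k f * Matrix.mat k m g = Matrix.mat n m (\<lambda>(i,j). \<Sum>l<k. f(i,l) * g(l,j))"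
  by (rule eq_matI) (auto simp: scalar_prod_def atLeast0LessThan intro!: sum.cong)

lemma mat_cong_5: "(\<And>i j. i < n \<Longrightarrow> j < n \<Longrightarrow> f(i,j) = g(i,j)) \<Longrightarrow> Matrix.mat n n f = Matrix.mat n n g"
  by (rule eq_matI) auto

lemma less5: "(i::nat) < 5 \<longleftrightarrow> i = 0 \<or> i = 1 \<or> i = 2 \<or> i = 3 \<or> i = 4" by auto
lemma less2: "(i::nat) < 2 \<longleftrightarrow> i = 0 \<or> i = 1" by auto

lemma less5S: "(i::nat) < 5 \<longleftrightarrow> i = 0 \<or> i = Suc 0 \<or> i = Suc (Suc 0) \<or> i = Suc (Suc (Suc 0)) \<or> i = Suc (Suc (Suc (Suc 0)))" by auto
lemma sum5S: "(\<Sum>l<5::nat. f l) = f 0 + f (Suc 0) + f (Suc (Suc 0)) + f (Suc (Suc (Suc 0))) + f (Suc (Suc (Suc (Suc 0))))"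
  by (simp add: eval_nat_numeral lessThan_Suc ac_simps)
lemma sum5: "(\<Sum>l<5::nat. f l) = f 0 + f 1 + f 2 + f 3 + f 4"
  by (simp add: eval_nat_numeral lessThan_Suc ac_simps)
lemma sum2: "(\<Sum>l<2::nat. f l) = f 0 + f 1"
  by (simp add: eval_nat_numeral lessThan_Suc ac_simps)

definition Phi :: "int mat \<Rightarrow> int mat" where
  "Phi W = mat_of_rows_list 5
    [[W$$(0,0), W$$(0,1), 0, 0, 2 * W$$(0,1)],
     [W$$(1,0), W$$(1,1), 0, 0, 2 * (W$$(1,1) - 1)],
     [0, 0, W$$(0,0), W$$(0,1), 2 * (W$$(0,0) - 1)],
     [0, 0, W$$(1,0), W$$(1,1), 2 * W$$(1,0)],
     [0, 0, 0, 0, 1]]"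

lemma Phi_mat: "Phi W = Matrix.mat 5 5 (\<lambda>(i,j).
    [[W$$(0,0), W$$(0,1), 0, 0, 2 * W$$(0,1)],
     [W$$(1,0), W$$(1,1), 0, 0, 2 * (W$$(1,1) - 1)],
     [0, 0, W$$(0,0), W$$(0,1), 2 * (W$$(0,0) - 1)],
     [0, 0, W$$(1,0), W$$(1,1), 2 * W$$(1,0)],
     [0, 0, 0, 0, 1]] ! i ! j)"
  unfolding Phi_def mat_of_rows_list_def by (simp add: eval_nat_numeral)

lemma carrier2: "W \<in> carrier_mat 2 2 \<Longrightarrow> W = Matrix.mat 2 2 (\<lambda>(i,j). W $$ (i,j))"
  by (rule eq_matI) auto

lemma Phi_mult: assumes X: "X \<in> carrier_mat 2 2" and Y: "Y \<in> carrier_mat 2 2"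
  shows "Phi (X * Y) = Phi X * Phi Y"
proof -
  have XY: "(X * Y) $$ (i,j) = X$$(i,0) * Y$$(0,j) + X$$(i,1) * Y$$(1,j)" if "i < 2" "j < 2" for i j
    using X Y that by (simp add: scalar_prod_def sum2 atLeast0LessThan)
  show ?thesis
    unfolding Phi_mat mat_mult_mat
    apply (rule mat_cong_5)
    apply (simp only: less5S)
    apply (elim disjE)
    apply (simp_all only: sum5S nth_Cons_0 nth_Cons_Suc case_prod_conv One_nat_def[symmetric])
    apply (simp_all add: XY algebra_simps)
    done
qed

lemma Phi_one: "Phi (1\<^sub>m 2) = 1\<^sub>m 5"
  unfolding Phi_mat
  apply (rule eq_matI)
     apply (simp_all only: less5 index_one_mat dim_row_mat dim_col_mat index_mat split: prod.splits)
  apply (elim disjE)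
  apply simp_all
  done


lemma rows2: "mat_of_rows_list 2 [r0, r1] = Matrix.mat 2 2 (\<lambda>(i,j). [r0,r1] ! i ! j)"
  unfolding mat_of_rows_list_def by (simp add: eval_nat_numeral)
lemma rows5: "mat_of_rows_list 5 [r0, r1, r2, r3, r4] = Matrix.mat 5 5 (\<lambda>(i,j). [r0,r1,r2,r3,r4] ! i ! j)"
  unfolding mat_of_rows_list_def by (simp add: eval_nat_numeral)

lemma less2S: "(i::nat) < 2 \<longleftrightarrow> i = 0 \<or> i = Suc 0" by auto
lemma sum2S: "(\<Sum>l<2::nat. f l) = f 0 + f (Suc 0)"
  by (simp add: eval_nat_numeral lessThan_Suc ac_simps)

definition A1i :: "int mat" where "A1i = mat_of_rows_list 2 [[1,-1],[0,1]]"
definition B1i :: "int mat" where "B1i = mat_of_rows_list 2 [[1,0],[-1,1]]"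
definition sAi :: "int mat" where "sAi = mat_of_rows_list 5
  [[1,-1,0,0,-2],[0,1,0,0,0],[0,0,1,-1,0],[0,0,0,1,0],[0,0,0,0,1]]"
definition sBi :: "int mat" where "sBi = mat_of_rows_list 5
  [[1,0,0,0,0],[-1,1,0,0,0],[0,0,1,0,0],[0,0,-1,1,-2],[0,0,0,0,1]]"

lemmas mdefs = A1_def B1_def A1i_def B1i_def sA_def sB_def sAi_def sBi_def sC_def sE_def

lemma carriers: "A1 \<in> carrier_mat 2 2" "B1 \<in> carrier_mat 2 2" "A1i \<in> carrier_mat 2 2" "B1i \<in> carrier_mat 2 2"
  "sA \<in> carrier_mat 5 5" "sB \<in> carrier_mat 5 5" "sAi \<in> carrier_mat 5 5" "sBi \<in> carrier_mat 5 5"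
  "sC \<in> carrier_mat 5 5" "sE \<in> carrier_mat 5 5" "Phi W \<in> carrier_mat 5 5"
  by (simp_all add: mdefs rows2 rows5 Phi_mat)

lemma mat_inv_eq: assumes X: "X \<in> carrier_mat n n" and Y: "Y \<in> carrier_mat n n"
  and XY: "X * Y = 1\<^sub>m n" and YX: "Y * X = 1\<^sub>m n"
  shows "mat_inv X = Y"
proof -
  let ?P = "\<lambda>Z. Z \<in> carrier_mat (dim_row X) (dim_row X) \<and> inverts_mat X Z \<and> inverts_mat Z X"
  have "?P Y" using X Y XY YX unfolding inverts_mat_def by auto
  hence PZ: "?P (mat_inv X)" unfolding mat_inv_def by (rule someI)
  define Z where "Z = mat_inv X"
  have Z: "Z \<in> carrier_mat n n" "Z * X = 1\<^sub>m n" using PZ X unfolding Z_def inverts_mat_def by auto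
  have "Z = Z * 1\<^sub>m n" using Z by simp
  also have "\<dots> = Z * (X * Y)" by (simp add: XY)
  also have "\<dots> = (Z * X) * Y" by (rule assoc_mult_mat[symmetric, OF Z(1) X Y])
  also have "\<dots> = Y" unfolding Z(2) using Y by simp
  finally show ?thesis unfolding Z_def .
qed

lemma prod2: "Matrix.mat 2 2 f * Matrix.mat 2 2 g = Matrix.mat 2 2 (\<lambda>(i,j). f(i,0) * g(0,j) + f(i,Suc 0) * g(Suc 0,j))"
  unfolding mat_mult_mat sum2S ..
lemma prod5: "Matrix.mat 5 5 f * Matrix.mat 5 5 g = Matrix.mat 5 5 (\<lambda>(i,j). f(i,0) * g(0,j) + f(i,Suc 0) * g(Suc 0,j)
   + f(i,Suc (Suc 0)) * g(Suc (Suc 0),j) + f(i,Suc (Suc (Suc 0))) * g(Suc (Suc (Suc 0)),j) + f(i,Suc (Suc (Suc (Suc 0)))) * g(Suc (Suc (Suc (Suc 0))),j))"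
  unfolding mat_mult_mat sum5S ..
lemma one2: "1\<^sub>m 2 = Matrix.mat 2 2 (\<lambda>(i,j). [[1,0],[0,1]] ! i ! j)"
  by (rule eq_matI) (auto simp: less2S)
lemma one5: "1\<^sub>m 5 = Matrix.mat 5 5 (\<lambda>(i,j). [[1,0,0,0,0],[0,1,0,0,0],[0,0,1,0,0],[0,0,0,1,0],[0,0,0,0,1]] ! i ! j)"
  apply (rule eq_matI) apply (simp_all only: less5S dim_row_mat dim_col_mat index_one_mat index_mat)
  apply (elim disjE) apply simp_all done

lemma A1_inv: "mat_inv A1 = A1i"
  apply (rule mat_inv_eq[of _ 2]) apply (simp_all add: carriers)
  unfolding mdefs rows2 prod2 one2
  by (rule mat_cong_5; simp only: less2S; elim disjE; simp)+

lemma B1_inv: "mat_inv B1 = B1i"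
  apply (rule mat_inv_eq[of _ 2]) apply (simp_all add: carriers)
  unfolding mdefs rows2 prod2 one2
  by (rule mat_cong_5; simp only: less2S; elim disjE; simp)+

lemma sA_inv: "mat_inv sA = sAi"
  apply (rule mat_inv_eq[of _ 5]) apply (simp_all add: carriers)
  unfolding mdefs rows5 prod5 one5
  by (rule mat_cong_5; simp only: less5S; elim disjE; simp only: nth_Cons_0 nth_Cons_Suc case_prod_conv; simp)+

lemma sB_inv: "mat_inv sB = sBi"
  apply (rule mat_inv_eq[of _ 5]) apply (simp_all add: carriers)
  unfolding mdefs rows5 prod5 one5
  by (rule mat_cong_5; simp only: less5S; elim disjE; simp only: nth_Cons_0 nth_Cons_Suc case_prod_conv; simp)+

lemma Phi_A1: "Phi A1 = sA" and Phi_B1: "Phi B1 = sB" and Phi_A1i: "Phi A1i = sAi" and Phi_B1i: "Phi B1i = sBi"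
  unfolding Phi_mat mdefs rows2 rows5
  by (rule mat_cong_5; simp only: less5S; elim disjE; simp only: nth_Cons_0 nth_Cons_Suc case_prod_conv; simp)+

lemma sE_facts: "sE * sE = 1\<^sub>m 5" "sE * sA * sE = sB" "sE * sB * sE = sA" "sE * sC * sE = sC"
  unfolding mdefs rows5 prod5 one5
  by (rule mat_cong_5; simp only: less5S; elim disjE; simp only: nth_Cons_0 nth_Cons_Suc case_prod_conv; simp)+

lemma Phi_pow: assumes X: "X \<in> carrier_mat 2 2" shows "Phi (X ^\<^sub>m n) = Phi X ^\<^sub>m n"
proof (induction n)
  case 0 show ?case using X carriers(11)[of X] by (simp add: Phi_one)
next
  case (Suc n)
  have "X ^\<^sub>m n \<in> carrier_mat 2 2" using X by simp
  then show ?case using Suc X by (simp add: Phi_mult)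
qed

lemma zpow_carrier: "X \<in> carrier_mat n n \<Longrightarrow> mat_inv X \<in> carrier_mat n n \<Longrightarrow> zpow_mat X k \<in> carrier_mat n n"
  unfolding zpow_mat_def by auto

lemma Phi_zpowA: "Phi (zpow_mat A1 k) = zpow_mat sA k"
  unfolding zpow_mat_def A1_inv sA_inv using carriers by (simp add: Phi_pow Phi_A1 Phi_A1i)
lemma Phi_zpowB: "Phi (zpow_mat B1 k) = zpow_mat sB k"
  unfolding zpow_mat_def B1_inv sB_inv using carriers by (simp add: Phi_pow Phi_B1 Phi_B1i)

lemma zpowA_carrier: "zpow_mat A1 k \<in> carrier_mat 2 2"
  by (rule zpow_carrier) (simp_all add: A1_inv carriers)
lemma zpowB_carrier: "zpow_mat B1 k \<in> carrier_mat 2 2"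
  by (rule zpow_carrier) (simp_all add: B1_inv carriers)

lemma W1_carrier: "W1 m d \<in> carrier_mat 2 2"
  unfolding W1_def by (induction d) (auto intro!: mult_carrier_mat zpowA_carrier zpowB_carrier)

lemma sW_Phi: "sW m d = Phi (W1 m d)"
proof (induction d)
  case 0 show ?case by (simp add: sW_def W1_def Phi_one)
next
  case (Suc d)
  have "W1 m d \<in> carrier_mat 2 2" by (rule W1_carrier)
  have e1: "W1 m (Suc d) = W1 m d * (zpow_mat A1 (m(2*d+1)) * zpow_mat B1 (m(2*d+2)))" by (simp add: W1_def)
  have e2: "sW m (Suc d) = sW m d * (zpow_mat sA (m(2*d+1)) * zpow_mat sB (m(2*d+2)))" by (simp add: sW_def)
  show ?case unfolding e1 e2 using Suc \<open>W1 m d \<in> carrier_mat 2 2\<close> zpowA_carrier zpowB_carrier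
    by (simp add: Phi_mult[OF \<open>W1 m d \<in> carrier_mat 2 2\<close> mult_carrier_mat[OF zpowA_carrier zpowB_carrier]]
      Phi_mult[OF zpowA_carrier zpowB_carrier] Phi_zpowA Phi_zpowB)
qed

definition um :: "int mat \<Rightarrow> bool" where
  "um W \<longleftrightarrow> W$$(0,0) * W$$(1,1) - W$$(0,1) * W$$(1,0) = 1"

lemma um_mult: assumes X: "X \<in> carrier_mat 2 2" and Y: "Y \<in> carrier_mat 2 2" and "um X" "um Y"
  shows "um (X * Y)"
proof -
  have XY: "(X * Y) $$ (i,j) = X$$(i,0) * Y$$(0,j) + X$$(i,1) * Y$$(1,j)" if "i < 2" "j < 2" for i j
    using X Y that by (simp add: scalar_prod_def sum2 atLeast0LessThan)
  have "(X * Y)$$(0,0) * (X * Y)$$(1,1) - (X * Y)$$(0,1) * (X * Y)$$(1,0)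
     = (X$$(0,0) * X$$(1,1) - X$$(0,1) * X$$(1,0)) * (Y$$(0,0) * Y$$(1,1) - Y$$(0,1) * Y$$(1,0))"
    by (simp add: XY algebra_simps)
  then show ?thesis using assms unfolding um_def by simp
qed

lemma um_pow: assumes X: "X \<in> carrier_mat 2 2" "um X" shows "um (X ^\<^sub>m n)"
proof (induction n)
  case 0 show ?case using X by (simp add: um_def)
next
  case (Suc n) then show ?case using X by (simp add: um_mult)
qed

lemma um_base: "um A1" "um B1" "um A1i" "um B1i"
  by (simp_all add: um_def mdefs rows2)

lemma um_W1: "um (W1 m d)"
proof (induction d)
  case 0 show ?case by (simp add: W1_def um_def)
next
  case (Suc d)
  have "um (zpow_mat A1 k)" "um (zpow_mat B1 k)" for k
    unfolding zpow_mat_def A1_inv B1_inv using carriers um_base by (simp_all add: um_pow)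
  have e1: "W1 m (Suc d) = W1 m d * (zpow_mat A1 (m(2*d+1)) * zpow_mat B1 (m(2*d+2)))" by (simp add: W1_def)
  have u: "um (zpow_mat A1 (m(2*d+1)) * zpow_mat B1 (m(2*d+2)))"
    by (rule um_mult[OF zpowA_carrier zpowB_carrier]) fact+
  show ?case unfolding e1 by (rule um_mult[OF W1_carrier mult_carrier_mat[OF zpowA_carrier zpowB_carrier] Suc u])
qed


lemma det_mat_0: "Determinant.det (Matrix.mat 0 0 f) = 1"
proof -
  have "Matrix.mat 0 0 f = 1\<^sub>m 0" by (rule eq_matI) auto
  thus ?thesis by simp
qed

lemma det_mat_Suc: "Determinant.det (Matrix.mat (Suc n) (Suc n) f) =
  (\<Sum>j<Suc n. f (0,j) * ((-1)^j * Determinant.det (Matrix.mat n n (\<lambda>(i',j'). f (Suc i', if j' < j then j' else Suc j')))))"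
proof -
  have "Determinant.det (Matrix.mat (Suc n) (Suc n) f) = (\<Sum>j<Suc n. Matrix.mat (Suc n) (Suc n) f $$ (0,j) * cofactor (Matrix.mat (Suc n) (Suc n) f) 0 j)"
    by (rule laplace_expansion_row) auto
  also have "\<dots> = (\<Sum>j<Suc n. f (0,j) * ((-1)^j * Determinant.det (Matrix.mat n n (\<lambda>(i',j'). f (Suc i', if j' < j then j' else Suc j')))))"
  proof (rule sum.cong[OF refl])
    fix j assume j: "j \<in> {..<Suc n}"
    have "mat_delete (Matrix.mat (Suc n) (Suc n) f) 0 j = Matrix.mat n n (\<lambda>(i',j'). f (Suc i', if j' < j then j' else Suc j'))"
      unfolding mat_delete_def by (rule eq_matI) auto
    thus "Matrix.mat (Suc n) (Suc n) f $$ (0,j) * cofactor (Matrix.mat (Suc n) (Suc n) f) 0 j =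
      f (0,j) * ((-1)^j * Determinant.det (Matrix.mat n n (\<lambda>(i',j'). f (Suc i', if j' < j then j' else Suc j'))))"
      using j unfolding cofactor_def by simp
  qed
  finally show ?thesis .
qed

lemma five: "(5::nat) = Suc (Suc (Suc (Suc (Suc 0))))" by simp

lemma det_N: fixes a b c d x :: "'a :: comm_ring_1" shows
  "Determinant.det (Matrix.mat 5 5 (\<lambda>(i,j).
     [[x, 0, -b, -a, -2*b],
      [0, x, -d, -c, -(2*d-2)],
      [-b, -a, x, 0, -(2*a-2)],
      [-d, -c, 0, x, -2*c],
      [-2*d, -2*c, -2*b, -2*a, x - (4*b+4*c+1)]] ! i ! j)) =
   (x - 1) * (1 - 4*(b+c)*x - ((b+c)^2 + 4*(a+d)*(b+c) + 2)*x^2 - 4*(b+c)*x^3 + x^4)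
   + (a*d - b*c - 1) * (-1 + x + 2*x^2 - 2*x^3 + 4*c*x - 4*c*x^2 + 4*b*x - 4*b*x^2 + b*c - b*c*x - a*d + a*d*x)"
  apply (simp only: five det_mat_Suc det_mat_0 sum.lessThan_Suc lessThan_0 sum.empty case_prod_conv)
  apply (simp add: power2_eq_square power3_eq_cube)
  apply (simp add: algebra_simps power2_eq_square power3_eq_cube power4_eq_xxxx)
  done


definition Mrows :: "'a :: comm_ring_1 \<Rightarrow> 'a \<Rightarrow> 'a \<Rightarrow> 'a \<Rightarrow> 'a list list" where
  "Mrows a b c d = [[0,0,b,a,2*b],[0,0,d,c,2*d-2],[b,a,0,0,2*a-2],[d,c,0,0,2*c],[2*d,2*c,2*b,2*a,4*b+4*c+1]]"

lemma M_explicit: "sC * Phi W * sE = Matrix.mat 5 5 (\<lambda>(i,j). Mrows (W$$(0,0)) (W$$(0,1)) (W$$(1,0)) (W$$(1,1)) ! i ! j)"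
  unfolding Mrows_def mdefs rows5 Phi_mat prod5
  by (rule mat_cong_5; simp only: less5S; elim disjE; simp only: nth_Cons_0 nth_Cons_Suc case_prod_conv; simp)

lemma poly_charM: fixes a b c d x :: "'a :: comm_ring_1"
  shows "poly (char_poly (Matrix.mat 5 5 (\<lambda>(i,j). Mrows a b c d ! i ! j))) x =
   (x - 1) * (1 - 4*(b+c)*x - ((b+c)^2 + 4*(a+d)*(b+c) + 2)*x^2 - 4*(b+c)*x^3 + x^4)
   + (a*d - b*c - 1) * (-1 + x + 2*x^2 - 2*x^3 + 4*c*x - 4*c*x^2 + 4*b*x - 4*b*x^2 + b*c - b*c*x - a*d + a*d*x)"
proof -
  let ?M = "Matrix.mat 5 5 (\<lambda>(i,j). Mrows a b c d ! i ! j)"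
  let ?N = "Matrix.mat 5 5 (\<lambda>(i,j).
     [[x, 0, -b, -a, -2*b],
      [0, x, -d, -c, -(2*d-2)],
      [-b, -a, x, 0, -(2*a-2)],
      [-d, -c, 0, x, -2*c],
      [-2*d, -2*c, -2*b, -2*a, x - (4*b+4*c+1)]] ! i ! j)"
  have "poly (char_poly ?M) x = Determinant.det ?N"
    unfolding char_poly_def
  proof (rule poly_det_cong[of _ 5])
    show "?N \<in> carrier_mat 5 5" by simp
    show "char_poly_matrix ?M \<in> carrier_mat 5 5" by simp
    fix i j :: nat assume "i < 5" "j < 5"
    then show "poly (char_poly_matrix ?M $$ (i, j)) x = ?N $$ (i, j)"
      unfolding char_poly_matrix_def Mrows_def
      by (simp only: less5S; elim disjE; simp)
  qed
  then show ?thesis by (simp only: det_N)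
qed

lemma tr_anti: "tr2 W = W$$(0,0) + W$$(1,1)" "antitr2 W = W$$(0,1) + W$$(1,0)"
  by (simp_all add: tr2_def antitr2_def)

lemma charpoly_int: fixes a b c d :: int assumes "a*d - b*c = 1"
  shows "char_poly (Matrix.mat 5 5 (\<lambda>(i,j). Mrows a b c d ! i ! j)) =
    [:-1, 1:] * [:1, -4 * (b+c), -((b+c)^2 + 4 * (a+d) * (b+c) + 2), -4 * (b+c), 1:]"
proof -
  have "poly (char_poly (Matrix.mat 5 5 (\<lambda>(i,j). Mrows a b c d ! i ! j))) =
    poly ([:-1, 1:] * [:1, -4 * (b+c), -((b+c)^2 + 4 * (a+d) * (b+c) + 2), -4 * (b+c), 1:])"
  proof
    fix x
    show "poly (char_poly (Matrix.mat 5 5 (\<lambda>(i,j). Mrows a b c d ! i ! j))) x =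
      poly ([:-1, 1:] * [:1, -4 * (b+c), -((b+c)^2 + 4 * (a+d) * (b+c) + 2), -4 * (b+c), 1:]) x"
      unfolding poly_charM using assms by (simp add: algebra_simps power2_eq_square power3_eq_cube power4_eq_xxxx)
  qed
  then show ?thesis by (simp add: poly_eq_poly_eq_iff)
qed


lemma quartic_factor: fixes s t x :: complex
  defines "r \<equiv> csqrt (5  *  s^2 + 4  *  t  *  s + 4)"
  defines "q1 \<equiv> csqrt (9  *  s^2 + 4  *  t  *  s + 4  *  s  *  r)"
  defines "q2 \<equiv> csqrt (9  *  s^2 + 4  *  t  *  s - 4  *  s  *  r)"
  shows "1 - 4 * s * x - (s^2 + 4 * t * s + 2) * x^2 - 4 * s * x^3 + x^4 =
    (x - (s + r/2 + q1/2))  *  (x - (s + r/2 - q1/2))  *  ((x - (s - r/2 + q2/2))  *  (x - (s - r/2 - q2/2)))"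
proof -
  have rsq: "r^2 = 5  *  s^2 + 4  *  t  *  s + 4" unfolding r_def by simp
  have q1sq: "q1^2 = 9  *  s^2 + 4  *  t  *  s + 4  *  s  *  r" unfolding q1_def by simp
  have q2sq: "q2^2 = 9  *  s^2 + 4  *  t  *  s - 4  *  s  *  r" unfolding q2_def by simp
  have h1: "(x - (s + r/2 + q1/2))  *  (x - (s + r/2 - q1/2)) = x^2 - (2 * s+r) * x + ((s + r/2)^2 - q1^2/4)"
    by (simp add: field_simps power2_eq_square)
  have h1': "(s + r/2)^2 - q1^2/4 = 1"
    unfolding q1sq by (simp add: field_simps power2_eq_square rsq[unfolded power2_eq_square])
  have h2: "(x - (s - r/2 + q2/2))  *  (x - (s - r/2 - q2/2)) = x^2 - (2 * s-r) * x + ((s - r/2)^2 - q2^2/4)"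
    by (simp add: field_simps power2_eq_square)
  have h2': "(s - r/2)^2 - q2^2/4 = 1"
    unfolding q2sq by (simp add: field_simps power2_eq_square rsq[unfolded power2_eq_square])
  have h3: "(x^2 - (2 * s+r) * x + 1)  *  (x^2 - (2 * s-r) * x + 1) = x^4 - 4 * s * x^3 + (2 + 4 * s^2 - r^2) * x^2 - 4 * s * x + 1"
    by (simp add: field_simps power2_eq_square power3_eq_cube power4_eq_xxxx)
  show ?thesis
    unfolding h1 h2 h1' h2' h3 rsq
    by (simp add: algebra_simps power2_eq_square)
qed


lemma map_M: "map_mat complex_of_int (Matrix.mat 5 5 (\<lambda>(i,j). Mrows a b c d ! i ! j)) =
   Matrix.mat 5 5 (\<lambda>(i,j). Mrows (of_int a) (of_int b) (of_int c) (of_int d) ! i ! j)"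
  unfolding map_mat_def dim_row_mat dim_col_mat
  by (rule mat_cong_5) (simp only: less5S; elim disjE; simp add: Mrows_def)

lemma eig_part: fixes a b c d :: int and x :: complex
  assumes det1: "a * d - b * c = 1"
  shows "eigenvalue (map_mat of_int (Matrix.mat 5 5 (\<lambda>(i,j). Mrows a b c d ! i ! j))) x \<longleftrightarrow>
     (let s' = complex_of_int (b + c); t' = complex_of_int (a + d);
               r = csqrt (5 * s'^2 + 4 * t' * s' + 4) in
           x \<in> {1,
                 s' + r / 2 + csqrt (9 * s'^2 + 4 * t' * s' + 4 * s' * r) / 2,
                 s' + r / 2 - csqrt (9 * s'^2 + 4 * t' * s' + 4 * s' * r) / 2,
                 s' - r / 2 + csqrt (9 * s'^2 + 4 * t' * s' - 4 * s' * r) / 2,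
                 s' - r / 2 - csqrt (9 * s'^2 + 4 * t' * s' - 4 * s' * r) / 2})"
proof -
  let ?Mc = "Matrix.mat 5 5 (\<lambda>(i,j). Mrows (complex_of_int a) (of_int b) (of_int c) (of_int d) ! i ! j)"
  define s' where "s' = complex_of_int (b + c)"
  define t' where "t' = complex_of_int (a + d)"
  have d1: "complex_of_int a * of_int d - of_int b * of_int c - 1 = 0"
    using arg_cong[OF det1, of complex_of_int] by simp
  have "eigenvalue (map_mat of_int (Matrix.mat 5 5 (\<lambda>(i,j). Mrows a b c d ! i ! j))) x \<longleftrightarrow> poly (char_poly ?Mc) x = 0"
    unfolding map_M by (rule eigenvalue_root_char_poly[of _ 5]) simp
  also have "poly (char_poly ?Mc) x = (x - 1) * (1 - 4 * s' * x - (s'^2 + 4 * t' * s' + 2) * x^2 - 4 * s' * x^3 + x^4)"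
    unfolding poly_charM d1 s'_def t'_def by simp
  finally show ?thesis
    unfolding Let_def s'_def[symmetric] t'_def[symmetric] quartic_factor
    by (simp add: right_minus_eq)
qed

theorem mainTheorem13:
  shows "inverts_mat sE sE \<and> mat_inv sE = sE \<and> sE * sA * sE = sB \<and> sE * sB * sE = sA \<and> sE * sC * sE = sC \<and>
    (\<forall>(m :: nat \<Rightarrow> int) (d :: nat) t s.
      t = tr2 (W1 m d) \<longrightarrow> s = antitr2 (W1 m d) \<longrightarrow>
      char_poly (sC * sW m d * sE) =
        [:-1, 1:] * [:1, -4 * s, -(s^2 + 4 * t * s + 2), -4 * s, 1:]
      \<and> (\<forall>x :: complex. eigenvalue (map_mat of_int (sC * sW m d * sE)) x \<longleftrightarrow>
          (let s' = complex_of_int s; t' = complex_of_int t;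
               r = csqrt (5 * s'^2 + 4 * t' * s' + 4) in
           x \<in> {1,
                 s' + r / 2 + csqrt (9 * s'^2 + 4 * t' * s' + 4 * s' * r) / 2,
                 s' + r / 2 - csqrt (9 * s'^2 + 4 * t' * s' + 4 * s' * r) / 2,
                 s' - r / 2 + csqrt (9 * s'^2 + 4 * t' * s' - 4 * s' * r) / 2,
                 s' - r / 2 - csqrt (9 * s'^2 + 4 * t' * s' - 4 * s' * r) / 2})))"
proof -
  have sEc: "sE \<in> carrier_mat 5 5" by (rule carriers(10))
  have i1: "inverts_mat sE sE" unfolding inverts_mat_def using sEc sE_facts(1) by simp
  have i2: "mat_inv sE = sE" by (rule mat_inv_eq[OF sEc sEc sE_facts(1) sE_facts(1)])
  have main: "\<forall>(m :: nat \<Rightarrow> int) (d :: nat) t s.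
      t = tr2 (W1 m d) \<longrightarrow> s = antitr2 (W1 m d) \<longrightarrow>
      char_poly (sC * sW m d * sE) =
        [:-1, 1:] * [:1, -4 * s, -(s^2 + 4 * t * s + 2), -4 * s, 1:]
      \<and> (\<forall>x :: complex. eigenvalue (map_mat of_int (sC * sW m d * sE)) x \<longleftrightarrow>
          (let s' = complex_of_int s; t' = complex_of_int t;
               r = csqrt (5 * s'^2 + 4 * t' * s' + 4) in
           x \<in> {1,
                 s' + r / 2 + csqrt (9 * s'^2 + 4 * t' * s' + 4 * s' * r) / 2,
                 s' + r / 2 - csqrt (9 * s'^2 + 4 * t' * s' + 4 * s' * r) / 2,
                 s' - r / 2 + csqrt (9 * s'^2 + 4 * t' * s' - 4 * s' * r) / 2,
                 s' - r / 2 - csqrt (9 * s'^2 + 4 * t' * s' - 4 * s' * r) / 2}))"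
  proof (intro allI impI)
    fix m :: "nat \<Rightarrow> int" and d :: nat and t s :: int
    assume ht: "t = tr2 (W1 m d)" and hs: "s = antitr2 (W1 m d)"
    define a where "a = W1 m d $$ (0,0)"
    define b where "b = W1 m d $$ (0,1)"
    define c where "c = W1 m d $$ (1,0)"
    define e where "e = W1 m d $$ (1,1)"
    have det1: "a * e - b * c = 1" using um_W1[of m d] unfolding um_def a_def b_def c_def e_def .
    have Mx: "sC * sW m d * sE = Matrix.mat 5 5 (\<lambda>(i,j). Mrows a b c e ! i ! j)"
      unfolding sW_Phi M_explicit a_def b_def c_def e_def ..
    have ts: "t = a + e" "s = b + c" using ht hs unfolding tr_anti a_def b_def c_def e_def by auto
    show "char_poly (sC * sW m d * sE) =
        [:-1, 1:] * [:1, -4 * s, -(s^2 + 4 * t * s + 2), -4 * s, 1:]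
      \<and> (\<forall>x :: complex. eigenvalue (map_mat of_int (sC * sW m d * sE)) x \<longleftrightarrow>
          (let s' = complex_of_int s; t' = complex_of_int t;
               r = csqrt (5 * s'^2 + 4 * t' * s' + 4) in
           x \<in> {1,
                 s' + r / 2 + csqrt (9 * s'^2 + 4 * t' * s' + 4 * s' * r) / 2,
                 s' + r / 2 - csqrt (9 * s'^2 + 4 * t' * s' + 4 * s' * r) / 2,
                 s' - r / 2 + csqrt (9 * s'^2 + 4 * t' * s' - 4 * s' * r) / 2,
                 s' - r / 2 - csqrt (9 * s'^2 + 4 * t' * s' - 4 * s' * r) / 2}))"
      unfolding Mx ts using charpoly_int[OF det1] eig_part[OF det1] by simp
  qed
  show ?thesis using i1 i2 sE_facts main by blast
qed

end
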